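(* Fix $a\in(1/2,1)$. There exist constants $c_a>0$ and $k_a$ (depending only on $a$) such that for all integers $k\ge k_a$, all $\varepsilon\in(0,1)$ and all $\delta\in(0,1/4)$, the $(\varepsilon,\delta)$-sample complexity of estimating the power sum $P_a(\vec p)=\sum_{i=1}^k p_i^a$ over $\Delta_k$ satisfies \[ C_{P_a}(\varepsilon,\delta)\ge c_a\,\log\frac1\delta\cdot\frac{k^{2-2a}}{\varepsilon^2}. \]
   Context: $\Delta_k$ is the set of probability distributions $\vec p=(p_1,\dots,p_k)$ on $[k]=\{1,\dots,k\}$; $\log$ is the natural logarithm. An estimator is any map $\hat f:[k]^*\to\mathbb{R}$ from finite sequences over $[k]$. For a property $f:\Delta_k\to\mathbb{R}$, the $(\varepsilon,\delta)$-sample complexity is \[ C_f(\varepsilon,\delta):=\min_{\hat f}\min\{n:\ \Pr_{X^n\sim\vec p}(|\hat f(X^n)-f(\vec p)|>\varepsilon)\le\delta\ \ \forall\vec p\in\Delta_k\}, \] where $X^n$ denotes $n$ i.i.d. samples from $\vec p$. *)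

theory Defs
  imports Complex_Main "HOL-Library.Extended_Nat" "HOL-Library.Extended_Real"
begin

definition simplex :: "nat \<Rightarrow> (nat \<Rightarrow> real) set" where
  "simplex k = {p. (\<forall>i\<in>{1..k}. 0 \<le> p i) \<and> (\<forall>i. i \<notin> {1..k} \<longrightarrow> p i = 0)
                   \<and> (\<Sum>i=1..k. p i) = 1}"

definition seqs :: "nat \<Rightarrow> nat \<Rightarrow> nat list set" where
  "seqs k n = {xs. length xs = n \<and> set xs \<subseteq> {1..k}}"

definition err_prob :: "nat \<Rightarrow> (nat \<Rightarrow> real) \<Rightarrow> (nat list \<Rightarrow> real) \<Rightarrow> ((nat \<Rightarrow> real) \<Rightarrow> real)
                        \<Rightarrow> real \<Rightarrow> nat \<Rightarrow> real" where
  "err_prob k p est f eps n =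
     (\<Sum>xs\<in>{xs\<in>seqs k n. \<bar>est xs - f p\<bar> > eps}. prod_list (map p xs))"

definition good_estimator :: "nat \<Rightarrow> ((nat \<Rightarrow> real) \<Rightarrow> real) \<Rightarrow> real \<Rightarrow> real
                              \<Rightarrow> (nat list \<Rightarrow> real) \<Rightarrow> nat \<Rightarrow> bool" where
  "good_estimator k f eps delta est n = (\<forall>p\<in>simplex k. err_prob k p est f eps n \<le> delta)"

text \<open>(eps,delta)-sample complexity; infinite if no estimator/sample size works.\<close>
definition sample_complexity :: "nat \<Rightarrow> ((nat \<Rightarrow> real) \<Rightarrow> real) \<Rightarrow> real \<Rightarrow> real \<Rightarrow> enat" where
  "sample_complexity k f eps delta =
     Inf {enat n | n est. good_estimator k f eps delta est n}"

definition power_sum :: "real \<Rightarrow> nat \<Rightarrow> (nat \<Rightarrow> real) \<Rightarrow> real" where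
  "power_sum a k p = (\<Sum>i=1..k. p i powr a)"

end

theory Submission imports Defs "HOL-Analysis.Convex" begin

lemma seqs_0: "seqs k 0 = {[]}" by (auto simp: seqs_def)

lemma seqs_Suc: "seqs k (Suc n) = (\<lambda>(x,xs). x#xs) ` ({1..k} \<times> seqs k n)"
proof (rule set_eqI)
  fix ys show "ys \<in> seqs k (Suc n) \<longleftrightarrow> ys \<in> (\<lambda>(x,xs). x#xs) ` ({1..k} \<times> seqs k n)"
    by (cases ys) (auto simp: seqs_def)
qed

lemma finite_seqs: "finite (seqs k n)"
  by (induction n) (auto simp: seqs_0 seqs_Suc)

lemma sum_seqs: "(\<Sum>xs\<in>seqs k n. prod_list (map (w::nat\<Rightarrow>real) xs)) = (\<Sum>i=1..k. w i) ^ n"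
proof (induction n)
  case 0 then show ?case by (simp add: seqs_0)
next
  case (Suc n)
  have inj: "inj_on (\<lambda>(x,xs). x#xs) ({1..k} \<times> seqs k n)" by (auto simp: inj_on_def)
  have "(\<Sum>xs\<in>seqs k (Suc n). prod_list (map w xs))
      = (\<Sum>(x,xs)\<in>{1..k} \<times> seqs k n. w x * prod_list (map w xs))"
    unfolding seqs_Suc by (subst sum.reindex[OF inj]) (simp add: case_prod_beta)
  also have "\<dots> = (\<Sum>x=1..k. \<Sum>xs\<in>seqs k n. w x * prod_list (map w xs))"
    by (rule sum.cartesian_product[symmetric])
  also have "\<dots> = (\<Sum>x=1..k. w x * (\<Sum>xs\<in>seqs k n. prod_list (map w xs)))"
    by (rule sum.cong[OF refl], rule sum_distrib_left[symmetric])
  also have "\<dots> = (\<Sum>x=1..k. w x) * (\<Sum>xs\<in>seqs k n. prod_list (map w xs))"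
    by (rule sum_distrib_right[symmetric])
  finally show ?case using Suc by simp
qed

lemma sqrt_prod_list: "sqrt (prod_list (map p xs) * prod_list (map q xs)) = prod_list (map (\<lambda>i. sqrt (p i * q i)) xs)"
  by (induction xs) (auto simp: real_sqrt_mult)

lemma prod_list_nonneg: "set xs \<subseteq> {1..k} \<Longrightarrow> \<forall>i\<in>{1..k}. 0 \<le> p i \<Longrightarrow> 0 \<le> prod_list (map (p::nat\<Rightarrow>real) xs)"
  by (induction xs) auto

lemma tangent:
  fixes a x y :: real assumes "0<a" "a<1" "0<x" "0<y"
  shows "x powr a \<le> y powr a + a * y powr (a-1) * (x - y)"
proof -
  have "(x/y) powr a * 1 powr (1-a) \<le> a*(x/y) + (1-a)*1"
    using Youngs_inequality_0[of a "1-a" "x/y" 1] assms by auto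
  hence "x powr a / y powr a \<le> a*(x/y) + (1-a)" using assms by (simp add: powr_divide)
  hence "x powr a \<le> (a*(x/y) + (1-a)) * y powr a" using assms by (simp add: divide_le_eq)
  also have "\<dots> = y powr a + a * (y powr a / y) * (x - y)" using assms by (simp add: field_simps)
  also have "y powr a / y = y powr (a-1)" using assms by (simp add: powr_diff)
  finally show ?thesis .
qed

lemma cs_sqrt:
  fixes P Q :: "'a \<Rightarrow> real"
  assumes "\<And>x. x\<in>A \<Longrightarrow> 0 \<le> P x" "\<And>x. x\<in>A \<Longrightarrow> 0 \<le> Q x"
  shows "(\<Sum>x\<in>A. sqrt (P x * Q x))^2 \<le> (\<Sum>x\<in>A. P x) * (\<Sum>x\<in>A. Q x)"
proof -
  have "(\<Sum>x\<in>A. sqrt (P x * Q x))^2 = (\<Sum>x\<in>A. sqrt (P x) * sqrt (Q x))^2"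
    by (simp add: real_sqrt_mult)
  also have "\<dots> \<le> (\<Sum>x\<in>A. (sqrt (P x))^2) * (\<Sum>x\<in>A. (sqrt (Q x))^2)"
    by (rule Cauchy_Schwarz_ineq_sum)
  also have "\<dots> = (\<Sum>x\<in>A. P x) * (\<Sum>x\<in>A. Q x)"
    using assms by (simp cong: sum.cong)
  finally show ?thesis .
qed

lemma amgm2: "(x::real)*y \<le> ((x+y)/2)^2"
proof -
  have "((x+y)/2)^2 - x*y = (x-y)^2/4" by (simp add: power2_eq_square field_simps)
  moreover have "0 \<le> (x-y)^2/4" by simp
  ultimately show ?thesis by linarith
qed

lemma test_bound:
  fixes p q :: "nat \<Rightarrow> real" and f :: "(nat \<Rightarrow> real) \<Rightarrow> real"
  assumes p: "p \<in> simplex k" and q: "q \<in> simplex k"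
    and gp: "err_prob k p est f eps n \<le> delta" and gq: "err_prob k q est f eps n \<le> delta"
    and gap: "2*eps < \<bar>f p - f q\<bar>" and d0: "0 \<le> delta" and d1: "delta \<le> 1/4"
  shows "((\<Sum>i=1..k. sqrt (p i * q i))^2)^n \<le> 4*delta*(1-delta)"
proof -
  define S where "S = seqs k n"
  define P where "P = (\<lambda>xs. prod_list (map p xs))"
  define Q where "Q = (\<lambda>xs. prod_list (map q xs))"
  define A where "A = {xs\<in>S. \<bar>est xs - f p\<bar> > eps}"
  define B where "B = S - A"
  have fin: "finite S" unfolding S_def by (rule finite_seqs)
  have AS: "A \<subseteq> S" and BS: "B \<subseteq> S" unfolding A_def B_def by auto
  have finA: "finite A" and finB: "finite B" using fin AS BS finite_subset by auto
  have pnn: "\<forall>i\<in>{1..k}. 0 \<le> p i" and qnn: "\<forall>i\<in>{1..k}. 0 \<le> q i"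
    using p q by (auto simp: simplex_def)
  have P0: "\<And>xs. xs \<in> S \<Longrightarrow> 0 \<le> P xs" unfolding P_def S_def seqs_def
    using prod_list_nonneg pnn by blast
  have Q0: "\<And>xs. xs \<in> S \<Longrightarrow> 0 \<le> Q xs" unfolding Q_def S_def seqs_def
    using prod_list_nonneg qnn by blast
  have P1: "(\<Sum>xs\<in>S. P xs) = 1" unfolding P_def S_def sum_seqs using p by (simp add: simplex_def)
  have Q1: "(\<Sum>xs\<in>S. Q xs) = 1" unfolding Q_def S_def sum_seqs using q by (simp add: simplex_def)
  define u where "u = (\<Sum>xs\<in>A. P xs)"
  define v where "v = (\<Sum>xs\<in>B. Q xs)"
  have u: "u \<le> delta" using gp unfolding u_def A_def err_prob_def P_def S_def by simp
  have "B \<subseteq> {xs\<in>S. \<bar>est xs - f q\<bar> > eps}" unfolding B_def A_def using gap by auto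
  hence "v \<le> (\<Sum>xs\<in>{xs\<in>S. \<bar>est xs - f q\<bar> > eps}. Q xs)"
    unfolding v_def by (intro sum_mono2) (use fin Q0 in auto)
  hence v: "v \<le> delta" using gq unfolding err_prob_def Q_def S_def by simp
  have u0: "0 \<le> u" unfolding u_def using P0 AS by (auto intro: sum_nonneg)
  have v0: "0 \<le> v" unfolding v_def using Q0 BS by (auto intro: sum_nonneg)
  have SAB: "S = A \<union> B" "A \<inter> B = {}" unfolding B_def using AS by auto
  have PB: "(\<Sum>xs\<in>B. P xs) = 1 - u"
    using P1 sum.union_disjoint[OF finA finB SAB(2), of P] SAB(1) unfolding u_def by simp
  have QA: "(\<Sum>xs\<in>A. Q xs) = 1 - v"
    using Q1 sum.union_disjoint[OF finA finB SAB(2), of Q] SAB(1) unfolding v_def by simp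
  define X where "X = (\<Sum>xs\<in>A. sqrt (P xs * Q xs))"
  define Y where "Y = (\<Sum>xs\<in>B. sqrt (P xs * Q xs))"
  have X2: "X^2 \<le> u * (1-v)" unfolding X_def u_def QA[symmetric]
    by (rule cs_sqrt) (use P0 Q0 AS in auto)
  have Y2: "Y^2 \<le> (1-u) * v" unfolding Y_def v_def PB[symmetric]
    by (rule cs_sqrt) (use P0 Q0 BS in auto)
  have X0: "0 \<le> X" unfolding X_def using P0 Q0 AS by (auto intro!: sum_nonneg)
  have Y0: "0 \<le> Y" unfolding Y_def using P0 Q0 BS by (auto intro!: sum_nonneg)
  have "(X*Y)^2 \<le> (u*(1-v)) * ((1-u)*v)"
    unfolding power_mult_distrib by (rule mult_mono[OF X2 Y2]) (use u v d1 u0 v0 in auto)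
  also have "\<dots> \<le> ((u*(1-u) + v*(1-v))/2)^2"
  proof -
    have e: "(u*(1-v)) * ((1-u)*v) = (u*(1-u))*(v*(1-v))" by (simp add: algebra_simps)
    show ?thesis unfolding e by (rule amgm2)
  qed
  finally have XY: "X*Y \<le> (u*(1-u) + v*(1-v))/2"
    by (rule power2_le_imp_le) (use u v d1 u0 v0 in \<open>auto intro!: mult_nonneg_nonneg\<close>)
  have "(\<Sum>i=1..k. sqrt (p i * q i))^n = (\<Sum>xs\<in>S. sqrt (P xs * Q xs))"
    unfolding S_def P_def Q_def sqrt_prod_list sum_seqs ..
  also have "\<dots> = X + Y" unfolding X_def Y_def SAB(1) by (rule sum.union_disjoint[OF finA finB SAB(2)])
  finally have "((\<Sum>i=1..k. sqrt (p i * q i))^2)^n = (X+Y)^2"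
    by (simp add: power_mult[symmetric] mult.commute power_mult)
  also have "\<dots> = X^2 + Y^2 + 2*(X*Y)" by (simp add: power2_eq_square algebra_simps)
  also have "\<dots> \<le> u*(1-v) + (1-u)*v + (u*(1-u) + v*(1-v))" 
  proof -
    from XY have "2*(X*Y) \<le> u*(1-u) + v*(1-v)" by simp
    thus ?thesis by (intro add_mono X2 Y2)
  qed
  also have "\<dots> \<le> 4*delta*(1-delta)"
  proof -
    have "(2*delta - (u+v)) * (2 - 2*delta - (u+v)) \<ge> 0"
      using u v d1 by (intro mult_nonneg_nonneg) auto
    thus ?thesis by (simp add: algebra_simps power2_eq_square)
  qed
  finally show ?thesis .
qed

lemma delta_log:
  fixes d :: real assumes "0 < d" "d < 1/4"
  shows "ln (4*d*(1-d)) \<le> - ln (1/d) / 8"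
proof (cases "d \<le> 1/8")
  case True
  have l8: "ln 8 = 3 * ln (2::real)" using ln_realpow[of 2 3] by simp
  have l4: "ln 4 = 2 * ln (2::real)" using ln_realpow[of 2 2] by simp
  have "ln 8 \<le> ln (1/d)" using True assms by (subst ln_le_cancel_iff) (auto simp: field_simps)
  hence L: "3 * ln 2 \<le> - ln d" using assms by (simp add: l8 ln_div)
  have "ln (4*d*(1-d)) \<le> ln (4*d)" using assms by (subst ln_le_cancel_iff) auto
  also have "\<dots> = 2 * ln 2 + ln d" using assms by (simp add: ln_mult l4)
  finally have "ln (4*d*(1-d)) \<le> 2 * ln 2 + ln d" .
  moreover have "0 < ln (2::real)" by simp
  moreover have "ln (1/d) = - ln d" using assms by (simp add: ln_div)
  ultimately show ?thesis using L by linarith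
next
  case False
  have l8: "ln 8 = 3 * ln (2::real)" using ln_realpow[of 2 3] by simp
  have "ln (1/d) \<le> ln 8" using False assms by (subst ln_le_cancel_iff) (auto simp: field_simps)
  hence L: "ln (1/d) \<le> 3 * ln 2" by (simp add: l8)
  have "4*d*(1-d) \<le> 3/4"
  proof -
    have "0 \<le> (1/4 - d) * (3/4 - d)" using assms by (intro mult_nonneg_nonneg) auto
    moreover have "4*d*(1-d) = 3/4 - 4*((1/4 - d) * (3/4 - d))" by (simp add: field_simps)
    ultimately show ?thesis by linarith
  qed
  hence "ln (4*d*(1-d)) \<le> ln (3/4)" using assms by (subst ln_le_cancel_iff) auto
  also have "ln (3/4) \<le> - 3 * ln (2::real) / 8"
  proof -
    have "ln ((4/3::real)^8) \<ge> ln (2^3)" by (subst ln_le_cancel_iff) (auto simp: power_divide)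
    hence "8 * ln (4/3::real) \<ge> 3 * ln 2" using l8 by (simp add: ln_realpow)
    moreover have "ln (3/4::real) = - ln (4/3)" by (simp add: ln_div)
    ultimately show ?thesis by simp
  qed
  finally show ?thesis using L by simp
qed

lemma n_bound:
  fixes h B2 d :: real
  assumes h: "0 < h" "h \<le> 1/4" and B: "1 - 2*h^2 \<le> B2" and Bn: "B2^n \<le> 4*d*(1-d)"
    and d: "0 < d" "d < 1/4"
  shows "ln (1/d) \<le> 32 * real n * h^2"
proof -
  have h2: "h^2 \<le> 1/16" using h power_mono[of h "1/4" 2] by (simp add: power2_eq_square)
  have pos: "0 < 1 - 2*h^2" using h2 by simp
  have B0: "0 < B2" using pos B by linarith
  have "ln (1 - 2*h^2) \<ge> - (2*h^2) - 2*(2*h^2)^2"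
    using ln_one_minus_pos_lower_bound[of "2*h^2"] h2 by simp
  moreover have "(2*h^2)^2 \<le> h^2"
  proof -
    have "(2*h^2)^2 = (4*h^2)*h^2" by (simp add: power2_eq_square)
    also have "\<dots> \<le> 1 * h^2" using h2 by (intro mult_right_mono) auto
    finally show ?thesis by simp
  qed
  ultimately have l1: "ln (1 - 2*h^2) \<ge> - 4*h^2" by simp
  have "ln B2 \<ge> ln (1 - 2*h^2)" using B pos by (subst ln_le_cancel_iff) auto
  hence lB: "ln B2 \<ge> -4*h^2" using l1 by linarith
  have "ln (B2^n) \<le> ln (4*d*(1-d))" using Bn B0 d by (subst ln_le_cancel_iff) auto
  hence "real n * ln B2 \<le> ln (4*d*(1-d))" using B0 by (simp add: ln_realpow)
  moreover have "real n * ln B2 \<ge> real n * (-4*h^2)" using lB by (intro mult_left_mono) auto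
  ultimately show ?thesis using delta_log[OF d] by simp
qed

definition dist2 :: "nat \<Rightarrow> real \<Rightarrow> nat \<Rightarrow> real" where
  "dist2 k x i = (if i = 1 then x else if 2 \<le> i \<and> i \<le> k then (1-x)/(real k - 1) else 0)"

lemma sum_dist2:
  assumes "k \<ge> 2"
  shows "(\<Sum>i=1..k. H (dist2 k x i) (dist2 k y i)) = H x y + (real k - 1) * H ((1-x)/(real k - 1)) ((1-y)/(real k - 1))"
proof -
  have "{1..k} = insert 1 {2..k}" using assms by auto
  hence "(\<Sum>i=1..k. H (dist2 k x i) (dist2 k y i)) = H x y + (\<Sum>i=2..k. H (dist2 k x i) (dist2 k y i))"
    by (simp add: dist2_def)
  also have "(\<Sum>i=2..k. H (dist2 k x i) (dist2 k y i)) = (\<Sum>i=2..k. H ((1-x)/(real k - 1)) ((1-y)/(real k - 1)))"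
    by (rule sum.cong) (auto simp: dist2_def)
  also have "\<dots> = (real k - 1) * H ((1-x)/(real k - 1)) ((1-y)/(real k - 1))"
    using assms by (simp add: of_nat_diff)
  finally show ?thesis .
qed

lemma dist2_simplex:
  assumes "k \<ge> 2" "0 \<le> x" "x \<le> 1"
  shows "dist2 k x \<in> simplex k"
proof -
  have s: "(\<Sum>i=1..k. dist2 k x i) = 1"
    using sum_dist2[OF assms(1), of "\<lambda>u v. u" x x] assms by simp
  have m: "real k - 1 > 0" using assms by simp
  show ?thesis unfolding simplex_def using s m assms by (auto simp: dist2_def)
qed

lemma power_sum_dist2:
  assumes "k \<ge> 2" "0 \<le> x" "x \<le> 1"
  shows "power_sum a k (dist2 k x) = x powr a + (real k - 1) powr (1-a) * (1-x) powr a"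
proof -
  have m: "real k - 1 > 0" using assms by simp
  have "power_sum a k (dist2 k x) = x powr a + (real k - 1) * ((1-x)/(real k - 1)) powr a"
    unfolding power_sum_def using sum_dist2[OF assms(1), of "\<lambda>u v. u powr a" x x] by simp
  also have "(real k - 1) * ((1-x)/(real k - 1)) powr a = (real k - 1) powr (1-a) * (1-x) powr a"
    using m assms by (simp add: powr_divide powr_diff)
  finally show ?thesis .
qed

lemma bc_dist2:
  assumes "k \<ge> 2" "0 \<le> x" "x \<le> 1" "0 \<le> y" "y \<le> 1"
  shows "(\<Sum>i=1..k. sqrt (dist2 k x i * dist2 k y i)) = sqrt (x*y) + sqrt ((1-x)*(1-y))"
proof -
  have m: "real k - 1 > 0" using assms by simp
  have "(\<Sum>i=1..k. sqrt (dist2 k x i * dist2 k y i)) = sqrt (x*y) + (real k - 1) * sqrt ((1-x)/(real k - 1) * ((1-y)/(real k - 1)))"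
    using sum_dist2[OF assms(1), of "\<lambda>u v. sqrt (u*v)" x y] by simp
  also have "(real k - 1) * sqrt ((1-x)/(real k - 1) * ((1-y)/(real k - 1))) = sqrt ((1-x)*(1-y))"
    using m by (simp add: real_sqrt_mult real_sqrt_divide)
  finally show ?thesis .
qed

lemma bc_lower:
  assumes "0 < h" "h \<le> 1/4"
  shows "(sqrt (1/2*(1/2+h)) + sqrt ((1-1/2)*(1-(1/2+h))))^2 \<ge> 1 - 2*h^2"
proof -
  define y1 where "y1 = 1/2*(1/2+h)"
  define y2 where "y2 = (1-1/2)*(1-(1/2+h))"
  have y: "0 \<le> y1" "0 \<le> y2" using assms by (auto simp: y1_def y2_def)
  have "(1/4 - h^2)^2 \<le> y1*y2"
  proof -
    have hh: "h^2 \<le> 1/4" using assms power_mono[of h "1/4" 2] by (simp add: power2_eq_square)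
    have "y1*y2 = 1/4*(1/4 - h^2)" by (simp add: y1_def y2_def field_simps power2_eq_square)
    moreover have "(1/4 - h^2) * (1/4-h^2) \<le> 1/4 * (1/4 - h^2)" using hh by (intro mult_right_mono) auto
    ultimately show ?thesis by (simp add: power2_eq_square)
  qed
  hence s: "1/4 - h^2 \<le> sqrt (y1*y2)" by (rule real_le_rsqrt)
  have "(sqrt y1 + sqrt y2)^2 = y1 + y2 + 2 * sqrt (y1*y2)"
    using y by (simp add: power2_eq_square algebra_simps real_sqrt_mult)
  moreover have "y1 + y2 = 1/2" by (simp add: y1_def y2_def field_simps)
  ultimately show ?thesis using s unfolding y1_def[symmetric] y2_def[symmetric] by linarith
qed

lemma gap_lemma:
  fixes a h M :: real
  assumes a: "0 < a" "a < 1" and h: "0 < h" "h \<le> 1/4" and M: "0 \<le> M"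
  shows "(1/2) powr a + M * (1 - 1/2) powr a - ((1/2+h) powr a + M * (1 - (1/2+h)) powr a)
         \<ge> a * (1/2) powr (a-1) * h * (M - 1)"
proof -
  define g where "g = a * (1/2) powr (a-1)"
  have t1: "(1/2+h) powr a \<le> (1/2) powr a + g * h"
    using tangent[of a "1/2+h" "1/2"] a h unfolding g_def by simp
  have t2: "(1/2-h) powr a \<le> (1/2) powr a - g * h"
    using tangent[of a "1/2-h" "1/2"] a h unfolding g_def by simp
  have "M * (1/2-h) powr a \<le> M * ((1/2) powr a - g * h)" using t2 M by (rule mult_left_mono)
  hence "M * (1 - (1/2+h)) powr a \<le> M * (1/2) powr a - M * (g*h)"
    by (simp add: algebra_simps)
  thus ?thesis using t1 unfolding g_def[symmetric] by (simp add: algebra_simps)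
qed

theorem theorem2:
  fixes a :: real
  assumes "1/2 < a" and "a < 1"
  shows "\<exists>c>0. \<exists>k0::nat. \<forall>k\<ge>k0. \<forall>eps delta::real.
           0 < eps \<and> eps < 1 \<and> 0 < delta \<and> delta < 1/4 \<longrightarrow>
           ereal (c * ln (1/delta) * real k powr (2 - 2*a) / eps^2)
             \<le> ereal_of_enat (sample_complexity k (power_sum a k) eps delta)"
proof (intro exI[of _ "1/18432"] conjI exI[of _ "nat \<lceil>25 powr (1/(1-a))\<rceil> + 2"] allI impI)
  show "(0::real) < 1/18432" by simp
  fix k :: nat and eps delta :: real
  assume k: "nat \<lceil>25 powr (1/(1-a))\<rceil> + 2 \<le> k"
  assume ed: "0 < eps \<and> eps < 1 \<and> 0 < delta \<and> delta < 1/4"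
  hence e0: "0 < eps" and e1: "eps < 1" and d0: "0 < delta" and d1: "delta < 1/4" by auto
  have a0: "0 < a" and a1: "a < 1" and a1': "0 < 1 - a" using assms by auto
  have k2: "k \<ge> 2" using k by simp
  define m where "m = real k - 1"
  define M where "M = m powr (1-a)"
  define K where "K = real k powr (1-a)"
  define g where "g = a * (1/2) powr (a-1)"
  define D where "D = M - 1"
  define h where "h = 3*eps/(g*D)"
  define L where "L = ln (1/delta)"
  have m0: "0 < m" using k2 unfolding m_def by simp
  have "25 powr (1/(1-a)) \<le> real (nat \<lceil>25 powr (1/(1-a))\<rceil>)" by linarith
  hence "25 powr (1/(1-a)) \<le> m" using k unfolding m_def by linarith
  hence "(25 powr (1/(1-a))) powr (1-a) \<le> M" unfolding M_def
    by (intro powr_mono2) (use a1' in auto)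
  hence M25: "25 \<le> M" using a1' by (simp add: powr_powr)
  have g_eq: "(1/2::real) powr (a-1) = 2 powr (1-a)"
    by (simp add: powr_divide powr_minus_divide[symmetric])
  have "1 \<le> (2::real) powr (1-a)" using a1' by (simp add: ge_one_powr_ge_zero)
  hence "a * 1 \<le> a * 2 powr (1-a)" using a0 by (intro mult_left_mono) auto
  hence ga: "a \<le> a * 2 powr (1-a)" by simp
  have g: "1/2 \<le> g" unfolding g_def g_eq using assms ga by linarith
  have K0: "0 < K" unfolding K_def using k2 by simp
  have "K/2 \<le> M"
  proof -
    have "2 powr (1-a) \<le> (2::real) powr 1" using a0 by (intro powr_mono) auto
    hence h2: "2 powr (1-a) \<le> (2::real)" by simp
    have "real k / 2 \<le> m" using k2 unfolding m_def by simp
    hence "(real k / 2) powr (1-a) \<le> M" unfolding M_def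
      by (intro powr_mono2) (use a1' in auto)
    moreover have "(real k / 2) powr (1-a) = K / 2 powr (1-a)" unfolding K_def
      by (simp add: powr_divide)
    moreover have "K / 2 \<le> K / 2 powr (1-a)" using h2 K0
      by (intro divide_left_mono) auto
    ultimately show ?thesis by linarith
  qed
  hence DK: "K/4 \<le> D" unfolding D_def using M25 by linarith
  have D24: "24 \<le> D" unfolding D_def using M25 by simp
  have gD: "K/8 \<le> g*D"
  proof -
    have "(1/2) * (K/4) \<le> g * D" using g DK K0 by (intro mult_mono) auto
    thus ?thesis by simp
  qed
  have gD0: "0 < g*D" using g D24 by simp
  have h0: "0 < h" unfolding h_def using e0 gD0 by simp
  have h14: "h \<le> 1/4"
  proof -
    have "12 \<le> g*D" using g D24 mult_mono[of "1/2" g 24 D] by simp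
    hence "3*eps \<le> 1/4 * (g*D)" using e1 by simp
    thus ?thesis unfolding h_def using gD0 by (simp add: divide_le_eq)
  qed
  have hK: "h \<le> 24*eps/K"
  proof -
    have "3*eps/(g*D) \<le> 3*eps/(K/8)" using gD gD0 K0 e0 by (intro frac_le) auto
    thus ?thesis unfolding h_def by simp
  qed
  have key: "1/18432 * L * K^2 / eps^2 \<le> real n" if good: "good_estimator k (power_sum a k) eps delta est n" for n est
  proof -
    define p where "p = dist2 k (1/2)"
    define q where "q = dist2 k (1/2+h)"
    have pS: "p \<in> simplex k" unfolding p_def by (rule dist2_simplex) (use k2 in auto)
    have qS: "q \<in> simplex k" unfolding q_def by (rule dist2_simplex) (use k2 h0 h14 in auto)
    have ep: "err_prob k p est (power_sum a k) eps n \<le> delta" using good pS by (simp add: good_estimator_def)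
    have eq: "err_prob k q est (power_sum a k) eps n \<le> delta" using good qS by (simp add: good_estimator_def)
    have "power_sum a k p - power_sum a k q \<ge> g * h * D"
      unfolding p_def q_def g_def D_def M_def m_def
      using power_sum_dist2[OF k2, of "1/2" a] power_sum_dist2[OF k2, of "1/2+h" a] h0 h14
        gap_lemma[OF a0 a1 h0 h14, of "(real k - 1) powr (1-a)"] by simp
    moreover have "g * h * D = 3*eps" unfolding h_def using g D24 by (simp add: field_simps)
    ultimately have gap: "2*eps < \<bar>power_sum a k p - power_sum a k q\<bar>" using e0 by linarith
    have tb: "((\<Sum>i=1..k. sqrt (p i * q i))^2)^n \<le> 4*delta*(1-delta)"
      by (rule test_bound[OF pS qS ep eq gap]) (use d0 d1 in auto)
    have "(\<Sum>i=1..k. sqrt (p i * q i)) = sqrt (1/2*(1/2+h)) + sqrt ((1-1/2)*(1-(1/2+h)))"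
      unfolding p_def q_def by (rule bc_dist2) (use k2 h0 h14 in auto)
    hence "1 - 2*h^2 \<le> (\<Sum>i=1..k. sqrt (p i * q i))^2" using bc_lower[OF h0 h14] by simp
    from n_bound[OF h0 h14 this tb d0 d1] have Ln: "L \<le> 32 * real n * h^2" unfolding L_def .
    have "h^2 \<le> (24*eps/K)^2" using hK h0 by (intro power_mono) auto
    hence "L \<le> 32 * real n * (24*eps/K)^2" using Ln mult_left_mono[of "h^2" "(24*eps/K)^2" "32 * real n"] by simp
    hence "L \<le> 18432 * real n * eps^2 / K^2" by (simp add: power_divide power_mult_distrib)
    hence "L * K^2 \<le> 18432 * real n * eps^2" using K0 by (simp add: divide_le_eq field_simps)
    thus ?thesis using e0 by (simp add: divide_le_eq field_simps)
  qed
  have Kpow: "real k powr (2 - 2*a) = K^2"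
    unfolding K_def by (simp add: power2_eq_square powr_add[symmetric])
  define S where "S = {enat n | n est. good_estimator k (power_sum a k) eps delta est n}"
  show "ereal (1/18432 * ln (1/delta) * real k powr (2 - 2*a) / eps^2)
             \<le> ereal_of_enat (sample_complexity k (power_sum a k) eps delta)"
  proof (cases "S = {}")
    case True
    thus ?thesis unfolding sample_complexity_def S_def[symmetric] by (simp add: top_enat_def)
  next
    case False
    hence "Inf S \<in> S" unfolding Inf_enat_def by (auto intro: LeastI)
    then obtain n est where n: "Inf S = enat n" "good_estimator k (power_sum a k) eps delta est n"
      unfolding S_def by blast
    show ?thesis unfolding sample_complexity_def S_def[symmetric] n(1)
      using key[OF n(2)] unfolding Kpow L_def by simp
  qed
qed

end
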